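(* For any digraph ${\tt G}$, any two sign assignments $\epsilon,\epsilon'$ on the path poset $P({\tt G})$ are isomorphic, i.e. there is $\eta\colon P({\tt G})\to\mathbb Z_2$ with $\eta(x)+\epsilon'_{x,y}\equiv\epsilon_{x,y}+\eta(y)\pmod 2$ for every covering pair $x\,\tilde\triangleleft\,y$.
   Context: A digraph ${\tt G}=(V,E)$ has finite $V$ and $E\subseteq(V\times V)\setminus\{(v,v)\}$. A multipath is a spanning subgraph (all vertices, subset of edges) each of whose connected components (of the underlying undirected graph) is an isolated vertex or a simple directed path (edges $e_1,\dots,e_k$ with target of $e_i$ equal to source of $e_{i+1}$, no repeated vertex, not a cycle). The path poset $P({\tt G})$ is the set of multipaths ordered by inclusion of edge sets. In a poset, $x\,\tilde\triangleleft\,y$ means $y$ covers $x$; a square is $x,y,y',z$ with $y\neq y'$, $x\,\tilde\triangleleft\,y\,\tilde\triangleleft\,z$, $x\,\tilde\triangleleft\,y'\,\tilde\triangleleft\,z$. A sign assignment assigns $\epsilon_{x,y}\in\mathbb Z_2$ to each covering pair such that $\epsilon_{x,y}+\epsilon_{y,z}\equiv\epsilon_{x,y'}+\epsilon_{y',z}+1\pmod 2$ for every square. *)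

theory Defs
  imports Main
begin

definition digraph :: "'v set \<Rightarrow> ('v \<times> 'v) set \<Rightarrow> bool" where
  "digraph V E \<longleftrightarrow> finite V \<and> E \<subseteq> (V \<times> V) - {(v, v) | v. True}"

definition und_rel :: "('v \<times> 'v) set \<Rightarrow> ('v \<times> 'v) set" where
  "und_rel S = S \<union> S\<inverse>"

definition component :: "'v set \<Rightarrow> ('v \<times> 'v) set \<Rightarrow> 'v \<Rightarrow> 'v set" where
  "component V S v = {w \<in> V. (v, w) \<in> (und_rel S)\<^sup>*}"

definition simple_dpath :: "('v \<times> 'v) set \<Rightarrow> 'v list \<Rightarrow> bool" where
  "simple_dpath F vs \<longleftrightarrow> length vs \<ge> 2 \<and> distinct vs \<and>
     F = {(vs ! i, vs ! (i + 1)) | i. i + 1 < length vs}"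

definition multipath :: "'v set \<Rightarrow> ('v \<times> 'v) set \<Rightarrow> ('v \<times> 'v) set \<Rightarrow> bool" where
  "multipath V E S \<longleftrightarrow> S \<subseteq> E \<and>
     (\<forall>v\<in>V. let C = component V S v; F = {e \<in> S. fst e \<in> C \<and> snd e \<in> C} in
        (C = {v} \<and> F = {}) \<or> (\<exists>vs. set vs = C \<and> simple_dpath F vs))"

definition path_poset :: "'v set \<Rightarrow> ('v \<times> 'v) set \<Rightarrow> ('v \<times> 'v) set set" where
  "path_poset V E = {S. multipath V E S}"

definition covers :: "'a set set \<Rightarrow> 'a set \<Rightarrow> 'a set \<Rightarrow> bool" where
  "covers P x y \<longleftrightarrow> x \<in> P \<and> y \<in> P \<and> x \<subset> y \<and> \<not> (\<exists>z\<in>P. x \<subset> z \<and> z \<subset> y)"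

text \<open>Sign assignment with values in Z_2, represented as bool (addition = exclusive or,
  i.e. \<noteq>). For every square x, y, y', z (y \<noteq> y') the parities differ.\<close>
definition sign_assignment :: "'a set set \<Rightarrow> ('a set \<Rightarrow> 'a set \<Rightarrow> bool) \<Rightarrow> bool" where
  "sign_assignment P \<epsilon> \<longleftrightarrow>
     (\<forall>x y y' z. y \<noteq> y' \<and> covers P x y \<and> covers P y z \<and> covers P x y' \<and> covers P y' z \<longrightarrow>
        ((\<epsilon> x y \<noteq> \<epsilon> y z) = (\<not> (\<epsilon> x y' \<noteq> \<epsilon> y' z))))"

end

theory Submission
  imports Defs
begin

fun gch :: "('a set \<Rightarrow> 'a set \<Rightarrow> bool) \<Rightarrow> 'a list \<Rightarrow> bool" where
  "gch \<delta> [] = False"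
| "gch \<delta> (e # l) = (gch \<delta> l \<noteq> \<delta> (set l) (insert e (set l)))"

lemma gch_indep:
  assumes dc: "\<And>x y. x \<in> P \<Longrightarrow> y \<subseteq> x \<Longrightarrow> y \<in> P"
    and sq: "\<And>x a b. a \<noteq> b \<Longrightarrow> a \<notin> x \<Longrightarrow> b \<notin> x \<Longrightarrow> insert a (insert b x) \<in> P \<Longrightarrow>
      ((\<delta> x (insert a x) \<noteq> \<delta> (insert a x) (insert a (insert b x))) =
       (\<delta> x (insert b x) \<noteq> \<delta> (insert b x) (insert a (insert b x))))"
  shows "length l = n \<Longrightarrow> distinct l \<Longrightarrow> distinct l' \<Longrightarrow> set l = set l' \<Longrightarrow> set l \<in> P
     \<Longrightarrow> gch \<delta> l = gch \<delta> l'"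
proof (induction n arbitrary: l l')
  case 0
  then show ?case by auto
next
  case (Suc n)
  then obtain e m where l: "l = e # m" by (cases l) auto
  from Suc.prems l obtain e' m' where l': "l' = e' # m'" by (cases l') auto
  have lm: "length m = n" using Suc.prems l by auto
  have lm': "length m' = n"
  proof -
    have "card (set l) = card (set l')" using Suc.prems by simp
    then have "length l = length l'" using Suc.prems distinct_card by metis
    then show ?thesis using Suc.prems l l' by simp
  qed
  show ?case
  proof (cases "e = e'")
    case True
    have "set m = set m'" using Suc.prems l l' True by auto
    moreover have "set m \<in> P" by (rule dc[OF Suc.prems(5)]) (auto simp: l)
    moreover have dm: "distinct m" "distinct m'" using Suc.prems(2,3) l l' by auto
    ultimately have "gch \<delta> m = gch \<delta> m'" using Suc.IH[OF lm dm(1) dm(2)] by blast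
    then show ?thesis using l l' True \<open>set m = set m'\<close> by simp
  next
    case False
    define K where "K = set m - {e'}"
    obtain k where k: "distinct k" "set k = K"
      using finite_distinct_list[of K] K_def by auto
    have em: "e' \<in> set m" and em': "e \<in> set m'" using Suc.prems l l' False by auto
    have eK: "e \<notin> K" "e' \<notin> K" using Suc.prems l K_def by auto
    have sm: "set m = insert e' K" using em K_def by auto
    have "set l' = insert e (insert e' K)" using Suc.prems(4) l sm by simp
    moreover have "e' \<notin> set m'" using Suc.prems(3) l' by simp
    ultimately have sm': "set m' = insert e K" using l' eK False by auto
    have sl: "set l = insert e (insert e' K)" using l sm by auto
    have Pm: "set m \<in> P" "set m' \<in> P"
      by (rule dc[OF Suc.prems(5)], auto simp: l) (rule dc[OF Suc.prems(5)], unfold Suc.prems(4) l', auto)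
    have dm: "distinct m" "distinct m'" using Suc.prems(2,3) l l' by auto
    have dk: "distinct (e' # k)" "distinct (e # k)" using k eK by auto
    have sk: "set m = set (e' # k)" "set m' = set (e # k)" using sm sm' k by auto
    have g1: "gch \<delta> m = gch \<delta> (e' # k)"
      by (rule Suc.IH[OF lm dm(1) dk(1) sk(1) Pm(1)])
    have g2: "gch \<delta> m' = gch \<delta> (e # k)"
      by (rule Suc.IH[OF lm' dm(2) dk(2) sk(2) Pm(2)])
    have zc: "insert e' (insert e K) = insert e (insert e' K)" by (rule insert_commute)
    have zP: "insert e' (insert e K) \<in> P" using Suc.prems(5) sl zc by simp
    have ne': "e' \<noteq> e" using False by simp
    have sqK: "(\<delta> K (insert e' K) \<noteq> \<delta> (insert e' K) (insert e (insert e' K))) =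
       (\<delta> K (insert e K) \<noteq> \<delta> (insert e K) (insert e (insert e' K)))"
      using sq[OF ne' eK(2) eK(1) zP] unfolding zc .
    have gl: "gch \<delta> l = ((gch \<delta> k \<noteq> \<delta> K (insert e' K)) \<noteq> \<delta> (insert e' K) (insert e (insert e' K)))"
      using l sm g1 k(2) by simp
    have gl': "gch \<delta> l' = ((gch \<delta> k \<noteq> \<delta> K (insert e K)) \<noteq> \<delta> (insert e K) (insert e' (insert e K)))"
      using l' sm' g2 k(2) by simp
    show ?thesis unfolding gl gl' zc using sqK by argo
  qed
qed

lemma covers_dc:
  assumes dc: "\<And>x y. x \<in> P \<Longrightarrow> y \<subseteq> x \<Longrightarrow> y \<in> P"
  shows "covers P x y \<longleftrightarrow> x \<in> P \<and> y \<in> P \<and> (\<exists>e. e \<notin> x \<and> y = insert e x)"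
proof
  assume c: "covers P x y"
  then have xy: "x \<in> P" "y \<in> P" "x \<subset> y" unfolding covers_def by auto
  then obtain e where e: "e \<in> y" "e \<notin> x" by auto
  have "insert e x \<in> P" using dc[OF xy(2)] e xy by auto
  then have "insert e x = y" using c e xy unfolding covers_def by blast
  then show "x \<in> P \<and> y \<in> P \<and> (\<exists>e. e \<notin> x \<and> y = insert e x)" using xy e by auto
next
  assume "x \<in> P \<and> y \<in> P \<and> (\<exists>e. e \<notin> x \<and> y = insert e x)"
  then show "covers P x y" unfolding covers_def by auto
qed

lemma abstract_main:
  fixes P :: "'a set set"
  assumes fin: "\<And>x. x \<in> P \<Longrightarrow> finite x"
    and dc: "\<And>x y. x \<in> P \<Longrightarrow> y \<subseteq> x \<Longrightarrow> y \<in> P"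
    and sq: "\<And>x a b. a \<noteq> b \<Longrightarrow> a \<notin> x \<Longrightarrow> b \<notin> x \<Longrightarrow> insert a (insert b x) \<in> P \<Longrightarrow>
      ((\<delta> x (insert a x) \<noteq> \<delta> (insert a x) (insert a (insert b x))) =
       (\<delta> x (insert b x) \<noteq> \<delta> (insert b x) (insert a (insert b x))))"
  shows "\<exists>\<eta>. \<forall>x y. covers P x y \<longrightarrow> \<eta> y = (\<eta> x \<noteq> \<delta> x y)"
proof -
  define ch :: "'a set \<Rightarrow> 'a list" where "ch x = (SOME l. distinct l \<and> set l = x)" for x
  have ch: "distinct (ch x) \<and> set (ch x) = x" if "finite x" for x
    unfolding ch_def by (rule someI_ex) (use finite_distinct_list[OF that] in auto)
  show ?thesis
  proof (intro exI allI impI)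
    fix x y assume c: "covers P x y"
    then obtain e where e: "e \<notin> x" "y = insert e x" "x \<in> P" "y \<in> P"
      using covers_dc[of P x y] dc by blast
    have cx: "distinct (ch x)" "set (ch x) = x" using ch fin e by auto
    have cy: "distinct (ch y)" "set (ch y) = y" using ch fin e by auto
    have "gch \<delta> (ch y) = gch \<delta> (e # ch x)"
      using gch_indep[where l="ch y" and n="length (ch y)" and l'="e # ch x", OF dc sq] cx cy e by auto
    then show "gch \<delta> (ch y) = (gch \<delta> (ch x) \<noteq> \<delta> x y)" using cx e by simp
  qed
qed


lemma und_sym: "(x, y) \<in> (und_rel T)\<^sup>* \<Longrightarrow> (y, x) \<in> (und_rel T)\<^sup>*"
proof -
  assume "(x, y) \<in> (und_rel T)\<^sup>*"
  then have "(y, x) \<in> ((und_rel T)\<inverse>)\<^sup>*" by (simp add: rtrancl_converse)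
  moreover have "(und_rel T)\<inverse> = und_rel T" unfolding und_rel_def by auto
  ultimately show ?thesis by simp
qed

lemma segment:
  fixes vs :: "'v list" and T :: "('v \<times> 'v) set"
  assumes dist: "distinct vs" and n: "n = length vs"
    and pq: "p \<le> q" "q < n"
    and inT: "\<And>k. p \<le> k \<Longrightarrow> k < q \<Longrightarrow> (vs!k, vs!(k+1)) \<in> T"
    and bd: "\<And>k. k+1 < n \<Longrightarrow> (vs!k, vs!(k+1)) \<in> T \<Longrightarrow> k+1 \<noteq> p \<and> k \<noteq> q"
    and cl: "\<And>x y. (x,y) \<in> T \<Longrightarrow> x \<in> set vs \<or> y \<in> set vs \<Longrightarrow>
              (\<exists>k. k+1 < n \<and> x = vs!k \<and> y = vs!(k+1))"
    and VV: "set vs \<subseteq> V"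
    and j: "p \<le> j" "j \<le> q"
  shows "component V T (vs!j) = {vs!m | m. p \<le> m \<and> m \<le> q}"
    and "{e \<in> T. fst e \<in> {vs!m | m. p \<le> m \<and> m \<le> q} \<and> snd e \<in> {vs!m | m. p \<le> m \<and> m \<le> q}}
         = {(vs!k, vs!(k+1)) | k. p \<le> k \<and> k < q}"
proof -
  define Seg where "Seg = {vs!m | m. p \<le> m \<and> m \<le> q}"
  have idx: "\<And>a b. a < n \<Longrightarrow> b < n \<Longrightarrow> vs!a = vs!b \<longleftrightarrow> a = b"
    using dist n by (simp add: nth_eq_iff_index_eq)
  have sub: "(vs!j, w) \<in> (und_rel T)\<^sup>* \<Longrightarrow> w \<in> Seg" for w
  proof (induction rule: rtrancl_induct)
    case base
    then show ?case using j Seg_def by auto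
  next
    case (step w w')
    from step.IH obtain m where m: "w = vs!m" "p \<le> m" "m \<le> q" unfolding Seg_def by auto
    from step.hyps(2) have "(w, w') \<in> T \<or> (w', w) \<in> T" unfolding und_rel_def by auto
    then show ?case
    proof
      assume wt: "(w, w') \<in> T"
      then obtain k where k: "k+1 < n" "w = vs!k" "w' = vs!(k+1)"
        using cl[OF wt] m pq n by force
      have "k = m" using idx[of k m] k m pq by auto
      moreover have "k \<noteq> q" using bd[of k] k wt by auto
      ultimately show ?thesis using k m Seg_def by auto
    next
      assume wt: "(w', w) \<in> T"
      then obtain k where k: "k+1 < n" "w' = vs!k" "w = vs!(k+1)"
        using cl[OF wt] m pq n by force
      have "k+1 = m" using idx[of "k+1" m] k m pq by auto
      moreover have "k+1 \<noteq> p" using bd[of k] k wt by auto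
      ultimately show ?thesis using k m Seg_def by auto
    qed
  qed
  have fromp: "(vs!p, vs!(p+d)) \<in> (und_rel T)\<^sup>*" if "p + d \<le> q" for d
    using that
  proof (induction d)
    case 0
    then show ?case by simp
  next
    case (Suc d)
    then have "(vs!(p+d), vs!(p+d+1)) \<in> und_rel T" using inT[of "p+d"] unfolding und_rel_def by auto
    with Suc show ?case by (simp add: rtrancl.rtrancl_into_rtrancl)
  qed
  have sup: "(vs!j, vs!m) \<in> (und_rel T)\<^sup>*" if "p \<le> m" "m \<le> q" for m
  proof -
    have "(vs!p, vs!j) \<in> (und_rel T)\<^sup>*" using fromp[of "j-p"] j by auto
    then have "(vs!j, vs!p) \<in> (und_rel T)\<^sup>*" by (rule und_sym)
    moreover have "(vs!p, vs!m) \<in> (und_rel T)\<^sup>*" using fromp[of "m-p"] that by auto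
    ultimately show ?thesis by (rule rtrancl_trans)
  qed
  have SegV: "Seg \<subseteq> V" using VV pq n unfolding Seg_def by auto
  show c: "component V T (vs!j) = {vs!m | m. p \<le> m \<and> m \<le> q}"
    unfolding component_def using sub sup SegV Seg_def by auto
  show "{e \<in> T. fst e \<in> {vs!m | m. p \<le> m \<and> m \<le> q} \<and> snd e \<in> {vs!m | m. p \<le> m \<and> m \<le> q}}
         = {(vs!k, vs!(k+1)) | k. p \<le> k \<and> k < q}"
  proof (intro equalityI subsetI)
    fix e assume e: "e \<in> {e \<in> T. fst e \<in> {vs!m | m. p \<le> m \<and> m \<le> q} \<and> snd e \<in> {vs!m | m. p \<le> m \<and> m \<le> q}}"
    then obtain m1 m2 where mm: "fst e = vs!m1" "p \<le> m1" "m1 \<le> q" "snd e = vs!m2" "p \<le> m2" "m2 \<le> q" "e \<in> T"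
      by auto
    from mm(7) have "(fst e, snd e) \<in> T" by simp
    then obtain k where k: "k+1 < n" "fst e = vs!k" "snd e = vs!(k+1)"
      using cl[of "fst e" "snd e"] mm pq n by force
    have "k = m1" using idx[of k m1] k mm pq by auto
    moreover have "k + 1 = m2" using idx[of "k+1" m2] k mm pq by auto
    ultimately show "e \<in> {(vs!k, vs!(k+1)) | k. p \<le> k \<and> k < q}" using k mm
      by (auto intro!: exI[of _ k] simp: prod_eq_iff)
  next
    fix e assume "e \<in> {(vs!k, vs!(k+1)) | k. p \<le> k \<and> k < q}"
    then obtain k where k: "e = (vs!k, vs!(k+1))" "p \<le> k" "k < q" by auto
    then show "e \<in> {e \<in> T. fst e \<in> {vs!m | m. p \<le> m \<and> m \<le> q} \<and> snd e \<in> {vs!m | m. p \<le> m \<and> m \<le> q}}"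
      using inT[of k] by fastforce
  qed
qed

lemma segment_ok:
  fixes vs :: "'v list" and T :: "('v \<times> 'v) set"
  assumes dist: "distinct vs" and n: "n = length vs"
    and pq: "p \<le> q" "q < n"
    and inT: "\<And>k. p \<le> k \<Longrightarrow> k < q \<Longrightarrow> (vs!k, vs!(k+1)) \<in> T"
    and bd: "\<And>k. k+1 < n \<Longrightarrow> (vs!k, vs!(k+1)) \<in> T \<Longrightarrow> k+1 \<noteq> p \<and> k \<noteq> q"
    and cl: "\<And>x y. (x,y) \<in> T \<Longrightarrow> x \<in> set vs \<or> y \<in> set vs \<Longrightarrow>
              (\<exists>k. k+1 < n \<and> x = vs!k \<and> y = vs!(k+1))"
    and VV: "set vs \<subseteq> V"
    and j: "p \<le> j" "j \<le> q"
  shows "let C = component V T (vs!j); F = {e \<in> T. fst e \<in> C \<and> snd e \<in> C} in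
        (C = {vs!j} \<and> F = {}) \<or> (\<exists>ws. set ws = C \<and> simple_dpath F ws)"
proof -
  have s1: "component V T (vs!j) = {vs!m | m. p \<le> m \<and> m \<le> q}"
    by (rule segment(1)[where vs=vs and T=T and p=p and q=q and n=n and V=V and j=j];
        (rule assms | erule assms | (erule (1) assms))+)
  have s2: "{e \<in> T. fst e \<in> {vs!m | m. p \<le> m \<and> m \<le> q} \<and> snd e \<in> {vs!m | m. p \<le> m \<and> m \<le> q}}
         = {(vs!k, vs!(k+1)) | k. p \<le> k \<and> k < q}"
    by (rule segment(2)[where vs=vs and T=T and p=p and q=q and n=n and V=V and j=j];
        (rule assms | erule assms | (erule (1) assms))+)
  note s = s1 s2
  show ?thesis
  proof (cases "p = q")
    case True
    then have "j = p" using j by auto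
    then have "component V T (vs!j) = {vs!j}" using s(1) True by auto
    moreover have "{e \<in> T. fst e \<in> component V T (vs!j) \<and> snd e \<in> component V T (vs!j)} = {}"
    proof -
      have e0: "{(vs!k, vs!(k+1)) | k. p \<le> k \<and> k < q} = {}" using True by auto
      show ?thesis unfolding s(1) using s(2)[unfolded e0] .
    qed
    ultimately show ?thesis by (simp add: Let_def)
  next
    case False
    define ws where "ws = map (\<lambda>i. vs!(p+i)) [0..<q+1-p]"
    have lw: "length ws = q+1-p" unfolding ws_def by simp
    have nw: "\<And>i. i < q+1-p \<Longrightarrow> ws!i = vs!(p+i)" unfolding ws_def by simp
    have setw: "set ws = {vs!m | m. p \<le> m \<and> m \<le> q}"
    proof (intro equalityI subsetI)
      fix x assume "x \<in> set ws"
      then obtain i where "i < length ws" "x = ws!i" by (auto simp: in_set_conv_nth)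
      then show "x \<in> {vs!m | m. p \<le> m \<and> m \<le> q}" using nw lw by (intro CollectI exI[of _ "p+i"]) auto
    next
      fix x assume "x \<in> {vs!m | m. p \<le> m \<and> m \<le> q}"
      then obtain m where m: "x = vs!m" "p \<le> m" "m \<le> q" by auto
      then have "x = ws!(m-p)" "m - p < length ws" using nw lw by auto
      then show "x \<in> set ws" by (metis nth_mem)
    qed
    have dw: "distinct ws" unfolding ws_def distinct_map
      using dist n pq by (auto simp: inj_on_def nth_eq_iff_index_eq)
    have Fw: "{(vs!k, vs!(k+1)) | k. p \<le> k \<and> k < q} = {(ws!i, ws!(i+1)) | i. i+1 < length ws}"
    proof (intro equalityI subsetI)
      fix e assume "e \<in> {(vs!k, vs!(k+1)) | k. p \<le> k \<and> k < q}"
      then obtain k where k: "e = (vs!k, vs!(k+1))" "p \<le> k" "k < q" by auto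
      then have "e = (ws!(k-p), ws!(k-p+1))" "k - p + 1 < length ws" using nw lw by auto
      then show "e \<in> {(ws!i, ws!(i+1)) | i. i+1 < length ws}" by blast
    next
      fix e assume "e \<in> {(ws!i, ws!(i+1)) | i. i+1 < length ws}"
      then obtain i where i: "e = (ws!i, ws!(i+1))" "i+1 < length ws" by auto
      then have "e = (vs!(p+i), vs!(p+i+1))" "p \<le> p+i" "p+i < q" using nw lw by auto
      then show "e \<in> {(vs!k, vs!(k+1)) | k. p \<le> k \<and> k < q}" by blast
    qed
    have "simple_dpath {e \<in> T. fst e \<in> component V T (vs!j) \<and> snd e \<in> component V T (vs!j)} ws"
      unfolding simple_dpath_def using s lw dw Fw False pq by auto
    then show ?thesis using s(1) setw by (auto simp: Let_def)
  qed
qed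


lemma remove_edge:
  assumes dg: "digraph V E" and mp: "multipath V E S" and dS: "d \<in> S"
  shows "multipath V E (S - {d})"
proof -
  define T where "T = S - {d}"
  obtain a b where d: "d = (a, b)" by (cases d)
  have SE: "S \<subseteq> E" using mp unfolding multipath_def by auto
  have SV: "S \<subseteq> V \<times> V" using SE dg unfolding digraph_def by auto
  have aV: "a \<in> V" and bV: "b \<in> V" using dS d SV by auto
  define R where "R = und_rel S"
  define C0 where "C0 = component V S a"
  define F0 where "F0 = {e \<in> S. fst e \<in> C0 \<and> snd e \<in> C0}"
  have aC: "a \<in> C0" unfolding C0_def component_def using aV by auto
  have abR: "(a, b) \<in> R" unfolding R_def und_rel_def using dS d by auto
  have bC: "b \<in> C0" unfolding C0_def component_def using bV abR R_def by auto
  have dF: "d \<in> F0" unfolding F0_def using dS d aC bC by auto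
  have "(C0 = {a} \<and> F0 = {}) \<or> (\<exists>vs. set vs = C0 \<and> simple_dpath F0 vs)"
    using mp aV unfolding multipath_def C0_def F0_def Let_def by blast
  then obtain vs where vs: "set vs = C0" "simple_dpath F0 vs" using dF by auto
  define n where "n = length vs"
  have dist: "distinct vs" and F0e: "F0 = {(vs ! i, vs ! (i + 1)) | i. i + 1 < n}"
    using vs(2) unfolding simple_dpath_def n_def by auto
  have idx: "\<And>x y. x < n \<Longrightarrow> y < n \<Longrightarrow> vs!x = vs!y \<longleftrightarrow> x = y"
    using dist n_def by (simp add: nth_eq_iff_index_eq)
  have closS: "(x, y) \<in> F0" if "(x, y) \<in> S" "x \<in> C0 \<or> y \<in> C0" for x y
  proof -
    have xy: "x \<in> V" "y \<in> V" using that SV by auto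
    have "(x, y) \<in> R" "(y, x) \<in> R" using that unfolding R_def und_rel_def by auto
    then have "x \<in> C0 \<and> y \<in> C0" using that xy unfolding C0_def component_def R_def
      by (auto intro: rtrancl_into_rtrancl)
    then show ?thesis using that unfolding F0_def by auto
  qed
  obtain i where i: "i + 1 < n" "a = vs!i" "b = vs!(i+1)" using dF F0e d by auto
  have C0V: "set vs \<subseteq> V" using vs(1) unfolding C0_def component_def by auto
  have edgeT: "(vs!k, vs!(k+1)) \<in> T \<longleftrightarrow> k \<noteq> i" if "k + 1 < n" for k
  proof
    assume "(vs!k, vs!(k+1)) \<in> T"
    then show "k \<noteq> i" using i d T_def by auto
  next
    assume "k \<noteq> i"
    then have "vs!k \<noteq> a" using idx[of k i] i that by auto
    moreover have "(vs!k, vs!(k+1)) \<in> S" using F0e F0_def that by blast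
    ultimately show "(vs!k, vs!(k+1)) \<in> T" using T_def d by auto
  qed
  have clT: "\<exists>k. k+1 < n \<and> x = vs!k \<and> y = vs!(k+1)"
    if "(x, y) \<in> T" "x \<in> set vs \<or> y \<in> set vs" for x y
  proof -
    have "(x, y) \<in> F0" using closS[of x y] that T_def vs(1) by auto
    then show ?thesis using F0e by auto
  qed
  have TE: "T \<subseteq> E" using SE T_def by auto
  have comp: "let C = component V T v; F = {e \<in> T. fst e \<in> C \<and> snd e \<in> C} in
        (C = {v} \<and> F = {}) \<or> (\<exists>vs. set vs = C \<and> simple_dpath F vs)" if vV: "v \<in> V" for v
  proof (cases "v \<in> C0")
    case True
    then obtain j where j: "j < n" "v = vs!j" using vs(1) n_def by (auto simp: in_set_conv_nth)
    show ?thesis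
    proof (cases "j \<le> i")
      case True
      show ?thesis unfolding j(2)
        apply (rule segment_ok[where p=0 and q=i and n=n])
        using dist n_def i True edgeT clT C0V by auto
    next
      case False
      show ?thesis unfolding j(2)
        apply (rule segment_ok[where p="i+1" and q="n-1" and n=n])
        using dist n_def i False edgeT clT C0V j by auto
    qed
  next
    case False
    have na: "(v, a) \<notin> R\<^sup>*"
    proof
      assume "(v, a) \<in> R\<^sup>*"
      then have "(a, v) \<in> R\<^sup>*" unfolding R_def by (rule und_sym)
      then show False using False vV unfolding C0_def component_def R_def by auto
    qed
    have reach: "(v, w) \<in> (und_rel T)\<^sup>*" if "(v, w) \<in> R\<^sup>*" for w
      using that
    proof (induction rule: rtrancl_induct)
      case base
      then show ?case by simp
    next
      case (step w w')
      have "w \<noteq> a"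
        using step.hyps(1) na by auto
      moreover have "w \<noteq> b"
      proof
        assume "w = b"
        then have "(v, a) \<in> R\<^sup>*" using step.hyps(1) abR
          unfolding R_def und_rel_def by (auto intro: rtrancl_into_rtrancl)
        then show False using na by simp
      qed
      ultimately have "(w, w') \<in> und_rel T" using step.hyps(2) d
        unfolding R_def und_rel_def T_def by auto
      then show ?case using step.IH by (rule rtrancl_into_rtrancl[rotated])
    qed
    have mono: "(und_rel T)\<^sup>* \<subseteq> R\<^sup>*" unfolding R_def und_rel_def T_def
      by (rule rtrancl_mono) auto
    have ceq: "component V T v = component V S v"
      unfolding component_def using reach mono R_def by auto
    have "a \<notin> component V S v" using na unfolding component_def R_def by auto
    then have feq: "{e \<in> T. fst e \<in> component V S v \<and> snd e \<in> component V S v}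
        = {e \<in> S. fst e \<in> component V S v \<and> snd e \<in> component V S v}"
      unfolding T_def using d by auto
    show ?thesis unfolding Let_def ceq feq using mp vV unfolding multipath_def Let_def by blast
  qed
  show ?thesis unfolding T_def[symmetric] multipath_def using TE comp by blast
qed

lemma multipath_diff:
  assumes dg: "digraph V E" and fD: "finite D"
  shows "multipath V E S \<Longrightarrow> D \<subseteq> S \<Longrightarrow> multipath V E (S - D)"
  using fD
proof (induction D arbitrary: S rule: finite_induct)
  case empty
  then show ?case by simp
next
  case (insert d D)
  have "multipath V E (S - D)" using insert by auto
  moreover have "d \<in> S - D" using insert by auto
  ultimately have "multipath V E ((S - D) - {d})" by (rule remove_edge[OF dg])
  moreover have "S - insert d D = (S - D) - {d}" by auto
  ultimately show ?case by simp
qed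

theorem corollary3p17:
  fixes V :: "'v set" and E :: "('v \<times> 'v) set"
    and \<epsilon> \<epsilon>' :: "('v \<times> 'v) set \<Rightarrow> ('v \<times> 'v) set \<Rightarrow> bool"
  assumes "digraph V E"
    and "sign_assignment (path_poset V E) \<epsilon>"
    and "sign_assignment (path_poset V E) \<epsilon>'"
  shows "\<exists>\<eta> :: ('v \<times> 'v) set \<Rightarrow> bool. \<forall>x y. covers (path_poset V E) x y \<longrightarrow>
           ((\<eta> x \<noteq> \<epsilon>' x y) = (\<epsilon> x y \<noteq> \<eta> y))"
proof -
  define P where "P = path_poset V E"
  define \<delta> where "\<delta> x y = (\<epsilon> x y \<noteq> \<epsilon>' x y)" for x y
  have EV: "E \<subseteq> V \<times> V" "finite V" using assms(1) unfolding digraph_def by blast+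
  have finE: "finite E" using EV by (meson finite_SigmaI finite_subset)
  have fin: "finite x" if "x \<in> P" for x
  proof -
    have "multipath V E x" using that unfolding P_def path_poset_def by simp
    then have "x \<subseteq> E" unfolding multipath_def by (rule conjunct1)
    then show ?thesis using finE by (rule finite_subset)
  qed
  have dc: "y \<in> P" if "x \<in> P" "y \<subseteq> x" for x y
  proof -
    have "multipath V E (x - (x - y))"
      using multipath_diff[OF assms(1), of "x - y" x] that fin unfolding P_def path_poset_def by auto
    moreover have "x - (x - y) = y" using that by auto
    ultimately show ?thesis unfolding P_def path_poset_def by simp
  qed
  have cv: "covers P x y \<longleftrightarrow> x \<in> P \<and> y \<in> P \<and> (\<exists>e. e \<notin> x \<and> y = insert e x)" for x y
    by (rule covers_dc) (erule dc, assumption)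
  have H1: "\<forall>x y y' z. y \<noteq> y' \<and> covers P x y \<and> covers P y z \<and> covers P x y' \<and> covers P y' z \<longrightarrow>
        ((\<epsilon> x y \<noteq> \<epsilon> y z) = (\<not> (\<epsilon> x y' \<noteq> \<epsilon> y' z)))"
    using assms(2) unfolding sign_assignment_def P_def .
  have sa1: "((\<epsilon> x y \<noteq> \<epsilon> y z) = (\<not> (\<epsilon> x y' \<noteq> \<epsilon> y' z)))"
    if "y \<noteq> y'" "covers P x y" "covers P y z" "covers P x y'" "covers P y' z" for x y y' z
  proof -
    have conj: "y \<noteq> y' \<and> covers P x y \<and> covers P y z \<and> covers P x y' \<and> covers P y' z"
      using that by (intro conjI)
    show ?thesis
      by (rule H1[THEN spec[of _ x], THEN spec[of _ y], THEN spec[of _ y'], THEN spec[of _ z], THEN mp, OF conj])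
  qed
  have H2: "\<forall>x y y' z. y \<noteq> y' \<and> covers P x y \<and> covers P y z \<and> covers P x y' \<and> covers P y' z \<longrightarrow>
        ((\<epsilon>' x y \<noteq> \<epsilon>' y z) = (\<not> (\<epsilon>' x y' \<noteq> \<epsilon>' y' z)))"
    using assms(3) unfolding sign_assignment_def P_def .
  have sa2: "((\<epsilon>' x y \<noteq> \<epsilon>' y z) = (\<not> (\<epsilon>' x y' \<noteq> \<epsilon>' y' z)))"
    if "y \<noteq> y'" "covers P x y" "covers P y z" "covers P x y'" "covers P y' z" for x y y' z
  proof -
    have conj: "y \<noteq> y' \<and> covers P x y \<and> covers P y z \<and> covers P x y' \<and> covers P y' z"
      using that by (intro conjI)
    show ?thesis
      by (rule H2[THEN spec[of _ x], THEN spec[of _ y], THEN spec[of _ y'], THEN spec[of _ z], THEN mp, OF conj])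
  qed
  have sq: "((\<delta> x (insert a x) \<noteq> \<delta> (insert a x) (insert a (insert b x))) =
       (\<delta> x (insert b x) \<noteq> \<delta> (insert b x) (insert a (insert b x))))"
    if ab: "a \<noteq> b" "a \<notin> x" "b \<notin> x" "insert a (insert b x) \<in> P" for x a b
  proof -
    have inP: "x \<in> P" "insert a x \<in> P" "insert b x \<in> P"
      using dc[OF ab(4)] by auto
    have ex1: "\<exists>e. e \<notin> x \<and> insert a x = insert e x" "\<exists>e. e \<notin> x \<and> insert b x = insert e x"
      by (rule exI[of _ a], use ab in simp) (rule exI[of _ b], use ab in simp)
    have c1: "covers P x (insert a x)" "covers P x (insert b x)"
      unfolding cv using inP ex1 by (simp only: simp_thms)+
    have ex2: "\<exists>e. e \<notin> insert a x \<and> insert a (insert b x) = insert e (insert a x)"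
      by (rule exI[of _ b]) (use ab in \<open>auto simp: insert_commute\<close>)
    have c2: "covers P (insert a x) (insert a (insert b x))"
      unfolding cv using inP ab ex2 by (simp only: simp_thms)
    have ex3: "\<exists>e. e \<notin> insert b x \<and> insert a (insert b x) = insert e (insert b x)"
      by (rule exI[of _ a]) (use ab in auto)
    have c3: "covers P (insert b x) (insert a (insert b x))"
      unfolding cv using inP ab ex3 by (simp only: simp_thms)
    have ne: "insert a x \<noteq> insert b x" using ab by auto
    have s1: "(\<epsilon> x (insert a x) \<noteq> \<epsilon> (insert a x) (insert a (insert b x))) =
        (\<not> (\<epsilon> x (insert b x) \<noteq> \<epsilon> (insert b x) (insert a (insert b x))))"
      by (rule sa1[OF ne c1(1) c2 c1(2) c3])
    have s2: "(\<epsilon>' x (insert a x) \<noteq> \<epsilon>' (insert a x) (insert a (insert b x))) =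
        (\<not> (\<epsilon>' x (insert b x) \<noteq> \<epsilon>' (insert b x) (insert a (insert b x))))"
      by (rule sa2[OF ne c1(1) c2 c1(2) c3])
    show ?thesis using s1 s2 unfolding \<delta>_def by argo
  qed
  have "\<exists>\<eta>. \<forall>x y. covers P x y \<longrightarrow> \<eta> y = (\<eta> x \<noteq> \<delta> x y)"
    by (rule abstract_main[where P=P and \<delta>=\<delta>]) (erule fin, erule (1) dc, rule sq, assumption+)
  then obtain \<eta> where eta: "\<And>x y. covers P x y \<Longrightarrow> \<eta> y = (\<eta> x \<noteq> \<delta> x y)"
    by blast
  show ?thesis
  proof (intro exI allI impI)
    fix x y assume "covers (path_poset V E) x y"
    then have "\<eta> y = (\<eta> x \<noteq> \<delta> x y)" using eta P_def by auto
    then show "(\<eta> x \<noteq> \<epsilon>' x y) = (\<epsilon> x y \<noteq> \<eta> y)" unfolding \<delta>_def by argo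
  qed
qed

end
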